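(* Let $R$ be an associative ring with identity, let $a,b,c\in R$ with both $b$ and $c$ regular, and put $t=cab$. Then the following are equivalent: (i) $a$ has a $(b,c)$-inverse; (ii) $r(a)\cap bR=\{0\}$ and $R=abR\oplus r(c)$; (iii) $r(t)=r(b)$ and $tR=cR$; (iv) $l(t)=l(c)$ and $Rt=Rb$.
   Context: For $a,b,c\in R$, $a$ is $(b,c)$-invertible if there exists $y\in R$ with $y\in (bRy)\cap(yRc)$, $yab=b$ and $cay=c$; such $y$ is unique and called the $(b,c)$-inverse of $a$, denoted $a^{\|(b,c)}$. An element is regular if $x=xzx$ for some $z\in R$. For $x\in R$: $l(x)=\{z\in R:zx=0\}$, $r(x)=\{z\in R:xz=0\}$, $xR=\{xz:z\in R\}$, $Rx=\{zx:z\in R\}$; $\oplus$ denotes an internal direct sum of additive subgroups. *)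

theory Defs
  imports Main
begin

definition right_ideal_gen :: "'a::ring_1 \<Rightarrow> 'a set" where
  "right_ideal_gen x = {x * z | z. True}"

definition left_ideal_gen :: "'a::ring_1 \<Rightarrow> 'a set" where
  "left_ideal_gen x = {z * x | z. True}"

definition lann :: "'a::ring_1 \<Rightarrow> 'a set" where
  "lann x = {z. z * x = 0}"

definition rann :: "'a::ring_1 \<Rightarrow> 'a set" where
  "rann x = {z. x * z = 0}"

definition regular_el :: "'a::ring_1 \<Rightarrow> bool" where
  "regular_el x \<longleftrightarrow> (\<exists>z. x = x * z * x)"

definition is_bc_inverse :: "'a::ring_1 \<Rightarrow> 'a \<Rightarrow> 'a \<Rightarrow> 'a \<Rightarrow> bool" where
  "is_bc_inverse a b c y \<longleftrightarrow>
     y \<in> {b * z * y | z. True} \<and> y \<in> {y * z * c | z. True} \<and> y * a * b = b \<and> c * a * y = c"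

definition bc_invertible :: "'a::ring_1 \<Rightarrow> 'a \<Rightarrow> 'a \<Rightarrow> bool" where
  "bc_invertible a b c \<longleftrightarrow> (\<exists>y. is_bc_inverse a b c y)"

definition is_direct_sum :: "'a::ab_group_add set \<Rightarrow> 'a set \<Rightarrow> 'a set \<Rightarrow> bool" where
  "is_direct_sum S A B \<longleftrightarrow> S = {x + y | x y. x \<in> A \<and> y \<in> B} \<and> A \<inter> B = {0}"

end

theory Submission
  imports Defs
begin

lemma L1:
  fixes a b c :: "'a::ring_1"
  assumes "bc_invertible a b c"
  shows "(\<exists>v. c = c*a*b*v) \<and> (\<exists>u. b = u*(c*a*b))"
proof -
  obtain y where y: "is_bc_inverse a b c y" using assms bc_invertible_def by blast
  then obtain z w where z: "y = b*z*y" and w: "y = y*w*c" and yab: "y*a*b = b" and cay: "c*a*y = c"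
    unfolding is_bc_inverse_def by blast
  have "c = c*a*b*(z*y)" using cay z by (metis mult.assoc)
  moreover have "b = (y*w)*(c*a*b)" using yab w by (metis mult.assoc)
  ultimately show ?thesis by blast
qed

lemma L2:
  fixes a b c :: "'a::ring_1"
  assumes v: "c = c*a*b*v" and u: "b = u*(c*a*b)"
  shows "bc_invertible a b c"
proof -
  define y where "y = u*c"
  have yab: "y*a*b = b" using u by (simp add: y_def mult.assoc)
  have yv: "y = b*v" using v by (metis y_def mult.assoc u)
  have cay: "c*a*y = c" using v yv by (simp add: mult.assoc)
  have yay: "y = y*a*y"
  proof -
    have "y = u*(c*a*b*v)" using v y_def by simp
    also have "\<dots> = ((u*c)*a)*(b*v)" by (simp add: mult.assoc)
    also have "\<dots> = y*a*y" using yv y_def by simp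
    finally show ?thesis .
  qed
  have "b*(v*a)*y = y*a*y" by (simp add: mult.assoc[symmetric] yv[symmetric])
  then have "y = b*(v*a)*y" using yay by simp
  moreover have "y = y*(a*u)*c" using yay by (simp add: y_def mult.assoc)
  ultimately have "is_bc_inverse a b c y" unfolding is_bc_inverse_def using yab cay by blast
  then show ?thesis unfolding bc_invertible_def by blast
qed

lemma L3:
  fixes a b c :: "'a::ring_1"
  assumes rb: "regular_el b" and rc: "regular_el c" and v: "c = c*a*b*v"
    and sub: "\<And>x. c*a*b*x = 0 \<Longrightarrow> b*x = 0"
  shows "\<exists>u. b = u*(c*a*b)"
proof -
  obtain w where w: "c = c*w*c" using rc regular_el_def by blast
  define t where "t = c*a*b"
  have tv: "c = t*v" using v t_def by simp
  have "t = c*w*t" using w by (metis t_def mult.assoc)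
  also have "\<dots> = t*(v*w)*t" using tv by (metis mult.assoc)
  finally have treg: "t = t*(v*w)*t" .
  have "t*(1 - (v*w)*t) = t - t*(v*w)*t" by (simp add: right_diff_distrib mult.assoc)
  then have "t*(1 - (v*w)*t) = 0" using treg by simp
  then have "b*(1 - (v*w)*t) = 0" using sub t_def by simp
  then have "b = (b*v*w)*t" by (simp add: algebra_simps)
  then show ?thesis using t_def by blast
qed

lemma L4:
  fixes a b c :: "'a::ring_1"
  assumes rb: "regular_el b" and u: "b = u*(c*a*b)"
    and sub: "\<And>x. x*(c*a*b) = 0 \<Longrightarrow> x*c = 0"
  shows "\<exists>v. c = c*a*b*v"
proof -
  obtain z where z: "b = b*z*b" using rb regular_el_def by blast
  define t where "t = c*a*b"
  have tu: "b = u*t" using u t_def by simp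
  have "t = t*z*b" using z by (metis t_def mult.assoc)
  also have "\<dots> = t*(z*u)*t" using tu by (metis mult.assoc)
  finally have treg: "t = t*(z*u)*t" .
  have "(1 - t*(z*u))*t = 0" using treg by (simp add: algebra_simps)
  then have "(1 - t*(z*u))*c = 0" using sub t_def by simp
  then have "c = t*(z*u*c)" by (simp add: algebra_simps)
  then show ?thesis using t_def by blast
qed

theorem theorem3p6:
  fixes a b c :: "'a::ring_1"
  assumes "regular_el b" and "regular_el c"
  defines "t \<equiv> c * a * b"
  shows "(bc_invertible a b c
          \<longleftrightarrow> (rann a \<inter> right_ideal_gen b = {0}
               \<and> is_direct_sum UNIV (right_ideal_gen (a * b)) (rann c)))
       \<and> (bc_invertible a b c
          \<longleftrightarrow> (rann t = rann b \<and> right_ideal_gen t = right_ideal_gen c))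
       \<and> (bc_invertible a b c
          \<longleftrightarrow> (lann t = lann c \<and> left_ideal_gen t = left_ideal_gen b))"
proof -
  have A: "bc_invertible a b c \<longleftrightarrow> (\<exists>v. c = t*v) \<and> (\<exists>u. b = u*t)"
    using L1 L2 t_def by metis
  have tc: "t \<in> right_ideal_gen c" unfolding right_ideal_gen_def t_def by (auto simp: mult.assoc)
  have tb: "t \<in> left_ideal_gen b" unfolding left_ideal_gen_def t_def by auto
  have rbt: "rann b \<subseteq> rann t" unfolding rann_def t_def by (auto simp: mult.assoc)
  have lct: "lann c \<subseteq> lann t" unfolding lann_def t_def by (auto simp: mult.assoc[symmetric])
  have RI: "right_ideal_gen t = right_ideal_gen c \<longleftrightarrow> (\<exists>v. c = t*v)"
  proof
    assume "right_ideal_gen t = right_ideal_gen c"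
    moreover have "c \<in> right_ideal_gen c" unfolding right_ideal_gen_def by (metis (mono_tags) mem_Collect_eq mult_1_right)
    ultimately show "\<exists>v. c = t*v" unfolding right_ideal_gen_def by auto
  next
    assume "\<exists>v. c = t*v"
    then obtain v where v: "c = t*v" by blast
    from tc obtain k where k: "t = c*k" unfolding right_ideal_gen_def by auto
    show "right_ideal_gen t = right_ideal_gen c" unfolding right_ideal_gen_def
      using v k by (auto simp: mult.assoc) (metis mult.assoc)+
  qed
  have LI: "left_ideal_gen t = left_ideal_gen b \<longleftrightarrow> (\<exists>u. b = u*t)"
  proof
    assume "left_ideal_gen t = left_ideal_gen b"
    moreover have "b \<in> left_ideal_gen b" unfolding left_ideal_gen_def by (metis (mono_tags) mem_Collect_eq mult_1_left)
    ultimately show "\<exists>u. b = u*t" unfolding left_ideal_gen_def by auto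
  next
    assume "\<exists>u. b = u*t"
    then obtain u where u: "b = u*t" by blast
    from tb obtain k where k: "t = k*b" unfolding left_ideal_gen_def by auto
    show "left_ideal_gen t = left_ideal_gen b" unfolding left_ideal_gen_def
      using u k by (auto simp: mult.assoc[symmetric]) (metis mult.assoc)+
  qed
  have III: "bc_invertible a b c \<longleftrightarrow> (rann t = rann b \<and> right_ideal_gen t = right_ideal_gen c)"
  proof
    assume i: "bc_invertible a b c"
    then obtain u where u: "b = u*t" using A by blast
    have "rann t \<subseteq> rann b" unfolding rann_def using u by (auto simp: mult.assoc)
    then show "rann t = rann b \<and> right_ideal_gen t = right_ideal_gen c" using rbt RI A i by blast
  next
    assume h: "rann t = rann b \<and> right_ideal_gen t = right_ideal_gen c"
    then obtain v0 where "c = t*v0" using RI by blast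
    then have v: "c = c*a*b*v0" using t_def by simp
    have "\<And>x. c*a*b*x = 0 \<Longrightarrow> b*x = 0" using h unfolding rann_def t_def by blast
    then obtain u where "b = u*(c*a*b)" using L3[OF assms(1,2) v] by blast
    then show "bc_invertible a b c" using L2 v by blast
  qed
  have IV: "bc_invertible a b c \<longleftrightarrow> (lann t = lann c \<and> left_ideal_gen t = left_ideal_gen b)"
  proof
    assume i: "bc_invertible a b c"
    then obtain v where v: "c = t*v" using A by blast
    have "lann t \<subseteq> lann c" unfolding lann_def using v by (auto simp: mult.assoc[symmetric])
    then show "lann t = lann c \<and> left_ideal_gen t = left_ideal_gen b" using lct LI A i by blast
  next
    assume h: "lann t = lann c \<and> left_ideal_gen t = left_ideal_gen b"
    then obtain u0 where "b = u0*t" using LI by blast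
    then have u: "b = u0*(c*a*b)" using t_def by simp
    have "\<And>x. x*(c*a*b) = 0 \<Longrightarrow> x*c = 0" using h unfolding lann_def t_def by blast
    then obtain v where "c = c*a*b*v" using L4[OF assms(1) u] by blast
    then show "bc_invertible a b c" using L2 u by blast
  qed
  have II: "bc_invertible a b c \<longleftrightarrow> (rann a \<inter> right_ideal_gen b = {0}
               \<and> is_direct_sum UNIV (right_ideal_gen (a * b)) (rann c))"
  proof
    assume "bc_invertible a b c"
    then obtain y where y: "is_bc_inverse a b c y" using bc_invertible_def by blast
    then obtain z w where z: "y = b*z*y" and w: "y = y*w*c" and yab: "y*a*b = b" and cay: "c*a*y = c"
      unfolding is_bc_inverse_def by blast
    have 1: "rann a \<inter> right_ideal_gen b = {0}"
    proof (rule set_eqI, rule iffI)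
      fix x :: 'a assume "x \<in> rann a \<inter> right_ideal_gen b"
      then obtain s where "a*x = 0" "x = b*s" unfolding rann_def right_ideal_gen_def by auto
      then have "x = y*(a*x)" using yab by (metis mult.assoc)
      then show "x \<in> {0}" using \<open>a*x = 0\<close> by simp
    next
      fix x :: 'a assume "x \<in> {0}"
      then show "x \<in> rann a \<inter> right_ideal_gen b" unfolding rann_def right_ideal_gen_def
        by (metis (mono_tags) IntI mem_Collect_eq mult_zero_right singletonD)
    qed
    have 2: "UNIV = {x + y | x y. x \<in> right_ideal_gen (a*b) \<and> y \<in> rann c}"
    proof (rule set_eqI, rule iffI)
      fix r :: 'a
      have "a*y*r = a*b*(z*y*r)" using z by (metis mult.assoc)
      then have "a*y*r \<in> right_ideal_gen (a*b)" unfolding right_ideal_gen_def by blast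
      moreover have "c*(r - a*y*r) = c*r - (c*a*y)*r" by (simp add: right_diff_distrib mult.assoc)
      then have "c*(r - a*y*r) = 0" using cay by simp
      then have "r - a*y*r \<in> rann c" unfolding rann_def by simp
      moreover have "r = a*y*r + (r - a*y*r)" by simp
      ultimately show "r \<in> {x + y | x y. x \<in> right_ideal_gen (a*b) \<and> y \<in> rann c}" by blast
    qed simp
    have 3: "right_ideal_gen (a*b) \<inter> rann c = {0}"
    proof (rule set_eqI, rule iffI)
      fix x :: 'a assume "x \<in> right_ideal_gen (a*b) \<inter> rann c"
      then obtain s where cx: "c*x = 0" and xs: "x = a*b*s" unfolding rann_def right_ideal_gen_def by auto
      have "x = a*(y*a*b)*s" using xs yab by simp
      also have "\<dots> = a*y*w*(c*x)" using w xs by (metis mult.assoc)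
      finally show "x \<in> {0}" using cx by simp
    next
      fix x :: 'a assume "x \<in> {0}"
      then show "x \<in> right_ideal_gen (a*b) \<inter> rann c" unfolding rann_def right_ideal_gen_def
        by (metis (mono_tags) IntI mem_Collect_eq mult_zero_right singletonD)
    qed
    show "rann a \<inter> right_ideal_gen b = {0} \<and> is_direct_sum UNIV (right_ideal_gen (a * b)) (rann c)"
      using 1 2 3 unfolding is_direct_sum_def by blast
  next
    assume h: "rann a \<inter> right_ideal_gen b = {0} \<and> is_direct_sum UNIV (right_ideal_gen (a * b)) (rann c)"
    have "(1::'a) \<in> UNIV" by simp
    then obtain p q where pq: "1 = p + q" "p \<in> right_ideal_gen (a*b)" "q \<in> rann c"
      using h unfolding is_direct_sum_def by blast
    then obtain s where s: "p = a*b*s" unfolding right_ideal_gen_def by auto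
    have "c = c*(p+q)" using pq by simp
    also have "\<dots> = c*p + c*q" by (simp add: distrib_left)
    also have "\<dots> = c*p" using pq unfolding rann_def by simp
    also have "\<dots> = c*a*b*s" using s by (simp add: mult.assoc)
    finally have v: "c = c*a*b*s" .
    have sub: "\<And>x. c*a*b*x = 0 \<Longrightarrow> b*x = 0"
    proof -
      fix x :: 'a assume cx: "c*a*b*x = 0"
      have "a*b*x \<in> right_ideal_gen (a*b) \<inter> rann c"
        using cx unfolding rann_def right_ideal_gen_def by (auto simp: mult.assoc)
      then have "a*b*x = 0" using h unfolding is_direct_sum_def by blast
      then have "b*x \<in> rann a \<inter> right_ideal_gen b" unfolding rann_def right_ideal_gen_def by (auto simp: mult.assoc)
      then show "b*x = 0" using h by blast
    qed
    obtain u where "b = u*(c*a*b)" using L3[OF assms(1,2) v sub] by blast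
    then show "bc_invertible a b c" using L2 v by blast
  qed
  show ?thesis using II III IV by blast
qed

end
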